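(* For every resource $e$, every nonempty set $S\subseteq[N]$ of players and every permutation $\psi$ of $S$, $$\sum_{i\in S} f_{i,e}\big(S^i(\psi)\cup\{i\}\big)=\sum_{k=1}^{|S|}\Big(\frac{\sigma_e}{k}+\sum_{T\subseteq S,\,|T|=k}\frac{h_e(T)}{\binom{|S|}{k}\cdot k}\Big),$$ where $S^i(\psi)$ is the set of players preceding $i$ in $\psi$ and $f_{i,e}(X)$ denotes the Shapley cost share of player $i\in X$ on $e$ when the set of players using $e$ is $X$.
   Context: Players $i\in[N]$ have weights $w_i(e)\in\mathbb{Z}_{\ge1}$ on resource $e$. Resource $e$ has parameters $\sigma_e\ge0$, $\xi_{e,1},\dots,\xi_{e,q}\ge0$ (at least one positive) and exponents $\alpha_1,\dots,\alpha_q>1$; its cost function is $F_e(0)=0$, $F_e(l)=\sigma_e+\sum_j\xi_{e,j}l^{\alpha_j}$ for $l>0$. Define $h_e(X)=\sum_{j\in[q]}\xi_{e,j}\big(\sum_{i\in X}w_i(e)\big)^{\alpha_j}$ for $X\subseteq[N]$. The Shapley cost share of $i\in X$ on $e$ when $X$ is the set of users of $e$ is $f_{i,e}(X)=\mathbb{E}\big[F_e\big(\sum_{i'\in X^i(\pi)}w_{i'}(e)+w_i(e)\big)-F_e\big(\sum_{i'\in X^i(\pi)}w_{i'}(e)\big)\big]$, where $\pi$ is a uniformly random permutation of $X$ and $X^i(\pi)$ is the set of players preceding $i$ in $\pi$. *)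

theory Defs
  imports Complex_Main "HOL-Combinatorics.Multiset_Permutations"
begin

definition preceding :: "'a list \<Rightarrow> 'a \<Rightarrow> 'a set" where
  "preceding xs i = set (takeWhile (\<lambda>x. x \<noteq> i) xs)"

definition load :: "(nat \<Rightarrow> 'e \<Rightarrow> nat) \<Rightarrow> 'e \<Rightarrow> nat set \<Rightarrow> real" where
  "load w e X = real (\<Sum>i\<in>X. w i e)"

definition costF :: "nat \<Rightarrow> ('e \<Rightarrow> real) \<Rightarrow> ('e \<Rightarrow> nat \<Rightarrow> real) \<Rightarrow> (nat \<Rightarrow> real)
    \<Rightarrow> 'e \<Rightarrow> real \<Rightarrow> real" where
  "costF q \<sigma> \<xi> \<alpha> e l = (if l = 0 then 0 else \<sigma> e + (\<Sum>j\<in>{1..q}. \<xi> e j * l powr \<alpha> j))"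

definition hfun :: "nat \<Rightarrow> (nat \<Rightarrow> 'e \<Rightarrow> nat) \<Rightarrow> ('e \<Rightarrow> nat \<Rightarrow> real) \<Rightarrow> (nat \<Rightarrow> real)
    \<Rightarrow> 'e \<Rightarrow> nat set \<Rightarrow> real" where
  "hfun q w \<xi> \<alpha> e X = (\<Sum>j\<in>{1..q}. \<xi> e j * (load w e X) powr \<alpha> j)"

definition shapley :: "nat \<Rightarrow> (nat \<Rightarrow> 'e \<Rightarrow> nat) \<Rightarrow> ('e \<Rightarrow> real) \<Rightarrow> ('e \<Rightarrow> nat \<Rightarrow> real)
    \<Rightarrow> (nat \<Rightarrow> real) \<Rightarrow> nat \<Rightarrow> 'e \<Rightarrow> nat set \<Rightarrow> real" where
  "shapley q w \<sigma> \<xi> \<alpha> i e X =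
     (\<Sum>\<pi>\<in>permutations_of_set X.
        costF q \<sigma> \<xi> \<alpha> e (load w e (preceding \<pi> i) + real (w i e))
        - costF q \<sigma> \<xi> \<alpha> e (load w e (preceding \<pi> i)))
     / real (card (permutations_of_set X))"

end

theory Submission
  imports Defs
begin

lemma perms_last:
  assumes "finite X" "X \<noteq> {}"
  shows "permutations_of_set X = (\<Union>y\<in>X. (\<lambda>xs. xs @ [y]) ` permutations_of_set (X - {y}))"
proof
  show "permutations_of_set X \<subseteq> (\<Union>y\<in>X. (\<lambda>xs. xs @ [y]) ` permutations_of_set (X - {y}))"
  proof
    fix p assume p: "p \<in> permutations_of_set X"
    then have sp: "set p = X" "distinct p" by (auto dest: permutations_of_setD)
    then have "p \<noteq> []" using assms by auto
    have e: "butlast p @ [last p] = p" using \<open>p \<noteq> []\<close> by simp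
    have d: "distinct (butlast p @ [last p])" using e sp(2) by simp
    then have nl: "last p \<notin> set (butlast p)" and db: "distinct (butlast p)" by auto
    have "set (butlast p @ [last p]) = X" using e sp(1) by simp
    then have "set (butlast p) = X - {last p}" using nl by auto
    note this db
    then have "butlast p \<in> permutations_of_set (X - {last p})" by (rule permutations_of_setI)
    note bp = this
    have pf: "p = (\<lambda>xs. xs @ [last p]) (butlast p)" using e by simp
    have im: "p \<in> (\<lambda>xs. xs @ [last p]) ` permutations_of_set (X - {last p})"
      using pf bp by (rule image_eqI)
    have "last p \<in> X" using sp \<open>p \<noteq> []\<close> by auto
    with im show "p \<in> (\<Union>y\<in>X. (\<lambda>xs. xs @ [y]) ` permutations_of_set (X - {y}))"
      by (rule UN_I[rotated])
  qed
next
  show "(\<Union>y\<in>X. (\<lambda>xs. xs @ [y]) ` permutations_of_set (X - {y})) \<subseteq> permutations_of_set X"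
  proof
    fix p assume "p \<in> (\<Union>y\<in>X. (\<lambda>xs. xs @ [y]) ` permutations_of_set (X - {y}))"
    then obtain y xs where y: "y \<in> X" and xs: "xs \<in> permutations_of_set (X - {y})" and pd: "p = xs @ [y]"
      by blast
    have sx: "set xs = X - {y}" and dx: "distinct xs" using xs by (auto dest: permutations_of_setD)
    have "set p = X" using sx y pd by auto
    moreover have "distinct p" using sx dx pd by simp
    ultimately show "p \<in> permutations_of_set X" by (rule permutations_of_setI)
  qed
qed

lemma sum_perms_last:
  assumes "finite X" "X \<noteq> {}"
  shows "(\<Sum>p\<in>permutations_of_set X. f p) = (\<Sum>y\<in>X. \<Sum>xs\<in>permutations_of_set (X - {y}). f (xs @ [y]))"
proof -
  have "(\<Sum>p\<in>permutations_of_set X. f p) = (\<Sum>y\<in>X. \<Sum>p\<in>(\<lambda>xs. xs @ [y]) ` permutations_of_set (X - {y}). f p)"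
    unfolding perms_last[OF assms]
    by (rule sum.UNION_disjoint) (use assms in auto)
  also have "\<dots> = (\<Sum>y\<in>X. \<Sum>xs\<in>permutations_of_set (X - {y}). f (xs @ [y]))"
    by (rule sum.cong[OF refl], subst sum.reindex) (auto simp: inj_on_def)
  finally show ?thesis .
qed


definition Pot :: "('a set \<Rightarrow> real) \<Rightarrow> 'a set \<Rightarrow> real" where
  "Pot g S = (\<Sum>T\<in>Pow S. g T / (real (card S choose card T) * real (card T)))"

definition Msum :: "('a set \<Rightarrow> real) \<Rightarrow> 'a \<Rightarrow> 'a set \<Rightarrow> real" where
  "Msum g i X = (\<Sum>p\<in>permutations_of_set X. g (preceding p i \<union> {i}) - g (preceding p i))"

lemma preceding_snoc_same: "i \<notin> set xs \<Longrightarrow> preceding (xs @ [i]) i = set xs"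
  unfolding preceding_def by (subst takeWhile_append2) auto

lemma preceding_snoc_other: "i \<in> set xs \<Longrightarrow> preceding (xs @ [y]) i = preceding xs i"
  unfolding preceding_def by (subst takeWhile_append1) auto

lemma preceding_notin: "i \<notin> preceding xs i"
  unfolding preceding_def by (auto dest: set_takeWhileD)

lemma preceding_sub: "preceding xs i \<subseteq> set xs"
  unfolding preceding_def by (auto dest: set_takeWhileD)

lemma Msum_rec:
  assumes "finite X" "i \<in> X"
  shows "Msum g i X = fact (card X - 1) * (g X - g (X - {i})) + (\<Sum>y\<in>X-{i}. Msum g i (X - {y}))"
proof -
  have "Msum g i X = (\<Sum>y\<in>X. \<Sum>xs\<in>permutations_of_set (X - {y}).
          g (preceding (xs @ [y]) i \<union> {i}) - g (preceding (xs @ [y]) i))"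
    unfolding Msum_def using assms by (subst sum_perms_last) auto
  also have "\<dots> = (\<Sum>xs\<in>permutations_of_set (X - {i}).
          g (preceding (xs @ [i]) i \<union> {i}) - g (preceding (xs @ [i]) i))
      + (\<Sum>y\<in>X-{i}. \<Sum>xs\<in>permutations_of_set (X - {y}).
          g (preceding (xs @ [y]) i \<union> {i}) - g (preceding (xs @ [y]) i))"
    using assms by (subst sum.remove[of X i]) auto
  also have "(\<Sum>xs\<in>permutations_of_set (X - {i}).
          g (preceding (xs @ [i]) i \<union> {i}) - g (preceding (xs @ [i]) i))
       = (\<Sum>xs\<in>permutations_of_set (X - {i}). g X - g (X - {i}))"
  proof (rule sum.cong[OF refl])
    fix xs assume "xs \<in> permutations_of_set (X - {i})"
    then have "set xs = X - {i}" by (auto dest: permutations_of_setD)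
    then show "g (preceding (xs @ [i]) i \<union> {i}) - g (preceding (xs @ [i]) i) = g X - g (X - {i})"
      using assms by (simp add: preceding_snoc_same insert_absorb)
  qed
  also have "\<dots> = fact (card X - 1) * (g X - g (X - {i}))"
    using assms by simp
  also have "(\<Sum>y\<in>X-{i}. \<Sum>xs\<in>permutations_of_set (X - {y}).
          g (preceding (xs @ [y]) i \<union> {i}) - g (preceding (xs @ [y]) i))
     = (\<Sum>y\<in>X-{i}. Msum g i (X - {y}))"
    unfolding Msum_def
  proof (rule sum.cong[OF refl], rule sum.cong[OF refl])
    fix y xs assume "y \<in> X - {i}" "xs \<in> permutations_of_set (X - {y})"
    then have "i \<in> set xs" using assms by (auto dest: permutations_of_setD)
    then show "g (preceding (xs @ [y]) i \<union> {i}) - g (preceding (xs @ [y]) i)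
        = g (preceding xs i \<union> {i}) - g (preceding xs i)"
      by (simp add: preceding_snoc_other)
  qed
  finally show ?thesis .
qed

lemma swap_pow:
  assumes "finite Y"
  shows "(\<Sum>y\<in>Y. \<Sum>T\<in>Pow (Y - {y}). f T) = (\<Sum>T\<in>Pow Y. real (card (Y - T)) * f T)"
proof -
  have "(\<Sum>y\<in>Y. \<Sum>T\<in>Pow (Y - {y}). f T) = (\<Sum>y\<in>Y. \<Sum>T\<in>{T\<in>Pow Y. y \<notin> T}. f T)"
    by (rule sum.cong[OF refl], rule sum.cong) auto
  also have "\<dots> = (\<Sum>T\<in>Pow Y. \<Sum>y\<in>{y\<in>Y. y \<notin> T}. f T)"
    by (rule sum.swap_restrict) (use assms in auto)
  also have "\<dots> = (\<Sum>T\<in>Pow Y. real (card (Y - T)) * f T)"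
    by (rule sum.cong[OF refl]) (simp add: set_diff_eq)
  finally show ?thesis .
qed

lemma Pot_rec:
  assumes "finite Y" "g {} = 0"
  shows "real (card Y) * Pot g Y = g Y + (\<Sum>y\<in>Y. Pot g (Y - {y}))"
proof -
  define n where "n = card Y"
  have pw: "real n * (g T / (real (n choose card T) * real (card T)))
       = (if T = Y then g T else 0) + real (card (Y - T)) * (g T / (real ((n - 1) choose card T) * real (card T)))"
    if T: "T \<subseteq> Y" for T
  proof -
    have fT: "finite T" using T assms finite_subset by blast
    have cd: "card (Y - T) = n - card T" using T fT assms n_def by (simp add: card_Diff_subset)
    show ?thesis
    proof (cases "T = {}")
      case True then show ?thesis using assms by auto
    next
      case ne: False
      then have t1: "card T \<ge> 1" using fT by (simp add: Suc_le_eq card_gt_0_iff)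
      show ?thesis
      proof (cases "T = Y")
        case True then show ?thesis using t1 n_def by simp
      next
        case False
        then have lt: "card T < n" using T assms n_def by (meson psubsetI psubset_card_mono)
        have pos: "(n - 1) choose card T > 0" using lt by simp
        have ab: "real (n - card T) * real (n choose card T) = real n * real ((n - 1) choose card T)"
          using binomial_absorb_comp[of n "card T"] by (metis of_nat_mult)
        have p2: "real (n choose card T) > 0" using lt by simp
        have m: "real n * (real ((n - 1) choose card T) * real (card T)) = real (n - card T) * (real (n choose card T) * real (card T))"
          by (metis ab mult.assoc)
        have eq: "real n / (real (n choose card T) * real (card T)) = real (n - card T) / (real ((n - 1) choose card T) * real (card T))"
          using m pos p2 t1 by (simp add: frac_eq_eq)
        have "real n * (g T / (real (n choose card T) * real (card T))) = g T * (real n / (real (n choose card T) * real (card T)))"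
          by simp
        also have "\<dots> = real (card (Y - T)) * (g T / (real ((n - 1) choose card T) * real (card T)))"
          using eq cd by simp
        finally show ?thesis using False by simp
      qed
    qed
  qed
  have "real (card Y) * Pot g Y = (\<Sum>T\<in>Pow Y. real n * (g T / (real (n choose card T) * real (card T))))"
    unfolding Pot_def n_def by (simp add: sum_distrib_left)
  also have "\<dots> = (\<Sum>T\<in>Pow Y. (if T = Y then g T else 0)) + (\<Sum>T\<in>Pow Y. real (card (Y - T)) * (g T / (real ((n - 1) choose card T) * real (card T))))"
    by (simp only: sum.distrib[symmetric]) (rule sum.cong[OF refl], rule pw, simp)
  also have "(\<Sum>T\<in>Pow Y. (if T = Y then g T else 0)) = g Y"
    using assms by (simp add: sum.delta)
  also have "(\<Sum>T\<in>Pow Y. real (card (Y - T)) * (g T / (real ((n - 1) choose card T) * real (card T))))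
      = (\<Sum>y\<in>Y. Pot g (Y - {y}))"
    unfolding Pot_def using assms n_def by (subst swap_pow[symmetric]) (auto intro!: sum.cong simp: card_Diff_singleton)
  finally show ?thesis .
qed


lemma Msum_Pot:
  assumes "finite X" "i \<in> X" "g {} = 0"
  shows "Msum g i X = fact (card X) * (Pot g X - Pot g (X - {i}))"
  using assms
proof (induction "card X" arbitrary: X)
  case 0
  then show ?case by auto
next
  case (Suc m X)
  have cX: "card X = Suc m" using Suc.hyps(2) by simp
  have IH: "Msum g i (X - {y}) = fact m * (Pot g (X - {y}) - Pot g (X - {i} - {y}))"
    if y: "y \<in> X - {i}" for y
  proof -
    have "Msum g i (X - {y}) = fact (card (X - {y})) * (Pot g (X - {y}) - Pot g (X - {y} - {i}))"
    proof (rule Suc.hyps)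
      show "m = card (X - {y})" using y cX Suc.prems by simp
    qed (use y Suc.prems in auto)
    moreover have "card (X - {y}) = m" using y cX Suc.prems by simp
    moreover have "X - {y} - {i} = X - {i} - {y}" by auto
    ultimately show ?thesis by simp
  qed
  define A where "A = (\<Sum>y\<in>X-{i}. Pot g (X - {y}))"
  define B where "B = (\<Sum>y\<in>X-{i}. Pot g (X - {i} - {y}))"
  have sr: "(\<Sum>y\<in>X. Pot g (X - {y})) = Pot g (X - {i}) + A"
    unfolding A_def by (rule sum.remove) (use Suc.prems in auto)
  have r1: "real (Suc m) * Pot g X = g X + Pot g (X - {i}) + A"
    using Pot_rec[of X g] Suc.prems cX sr by simp
  have r2: "real m * Pot g (X - {i}) = g (X - {i}) + B"
    using Pot_rec[of "X - {i}" g] Suc.prems cX unfolding B_def by simp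
  have "Msum g i X = fact m * (g X - g (X - {i})) + (\<Sum>y\<in>X-{i}. fact m * (Pot g (X - {y}) - Pot g (X - {i} - {y})))"
    using Msum_rec[of X i g] Suc.prems cX IH by simp
  also have "\<dots> = fact m * (g X - g (X - {i}) + A - B)"
  proof -
    have "(\<Sum>y\<in>X-{i}. fact m * (Pot g (X - {y}) - Pot g (X - {i} - {y}))) = fact m * (A - B)"
      unfolding A_def B_def by (simp add: sum_subtractf sum_distrib_left right_diff_distrib)
    then show ?thesis by (simp add: algebra_simps)
  qed
  also have "\<dots> = fact m * (real (Suc m) * Pot g X - real (Suc m) * Pot g (X - {i}))"
    using r1 r2 by (simp add: algebra_simps)
  also have "\<dots> = fact (card X) * (Pot g X - Pot g (X - {i}))"
    using cX by (simp add: algebra_simps)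
  finally show ?case .
qed

lemma Pot_empty: "Pot g {} = 0"
  unfolding Pot_def by simp

lemma tele:
  "distinct xs \<Longrightarrow> (\<Sum>i\<in>set xs. Pot g (preceding xs i \<union> {i}) - Pot g (preceding xs i)) = Pot g (set xs)"
proof (induction xs rule: rev_induct)
  case Nil
  then show ?case by (simp add: Pot_empty)
next
  case (snoc y xs)
  have yn: "y \<notin> set xs" using snoc by simp
  have "(\<Sum>i\<in>set (xs @ [y]). Pot g (preceding (xs @ [y]) i \<union> {i}) - Pot g (preceding (xs @ [y]) i))
      = (Pot g (preceding (xs @ [y]) y \<union> {y}) - Pot g (preceding (xs @ [y]) y))
        + (\<Sum>i\<in>set xs. Pot g (preceding (xs @ [y]) i \<union> {i}) - Pot g (preceding (xs @ [y]) i))"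
    using yn by simp
  also have "(\<Sum>i\<in>set xs. Pot g (preceding (xs @ [y]) i \<union> {i}) - Pot g (preceding (xs @ [y]) i))
      = (\<Sum>i\<in>set xs. Pot g (preceding xs i \<union> {i}) - Pot g (preceding xs i))"
    by (rule sum.cong[OF refl]) (simp add: preceding_snoc_other)
  also have "\<dots> = Pot g (set xs)" using snoc by simp
  also have "preceding (xs @ [y]) y = set xs" using yn by (rule preceding_snoc_same)
  finally show ?case by simp
qed



theorem lemma7p1:
  fixes N q :: nat
    and w :: "nat \<Rightarrow> 'e \<Rightarrow> nat"
    and \<sigma> :: "'e \<Rightarrow> real"
    and \<xi> :: "'e \<Rightarrow> nat \<Rightarrow> real"
    and \<alpha> :: "nat \<Rightarrow> real"
    and e :: 'e
    and S :: "nat set"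
    and \<psi> :: "nat list"
  assumes w_pos: "\<And>i e'. i \<in> {1..N} \<Longrightarrow> w i e' \<ge> 1"
    and \<sigma>_nn: "\<And>e'. \<sigma> e' \<ge> 0"
    and \<xi>_nn: "\<And>e' j. j \<in> {1..q} \<Longrightarrow> \<xi> e' j \<ge> 0"
    and \<xi>_pos: "\<And>e'. \<exists>j\<in>{1..q}. \<xi> e' j > 0"
    and \<alpha>_gt1: "\<And>j. j \<in> {1..q} \<Longrightarrow> \<alpha> j > 1"
    and S_sub: "S \<subseteq> {1..N}"
    and S_ne: "S \<noteq> {}"
    and \<psi>_perm: "\<psi> \<in> permutations_of_set S"
  shows "(\<Sum>i\<in>S. shapley q w \<sigma> \<xi> \<alpha> i e (preceding \<psi> i \<union> {i}))
       = (\<Sum>k=1..card S. \<sigma> e / real k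
            + (\<Sum>T\<in>{T. T \<subseteq> S \<and> card T = k}.
                 hfun q w \<xi> \<alpha> e T / (real (card S choose k) * real k)))"
  proof -
  define g where "g = (\<lambda>T. costF q \<sigma> \<xi> \<alpha> e (load w e T))"
  have g0: "g {} = 0" unfolding g_def load_def costF_def by simp
  have finS: "finite S" using S_sub finite_subset by blast
  have dpsi: "distinct \<psi>" and spsi: "set \<psi> = S" using \<psi>_perm by (auto dest: permutations_of_setD)
  have sh: "shapley q w \<sigma> \<xi> \<alpha> i e X = Pot g X - Pot g (X - {i})" if X: "finite X" "i \<in> X" for i X
  proof -
    have "shapley q w \<sigma> \<xi> \<alpha> i e X = Msum g i X / fact (card X)"
      unfolding shapley_def Msum_def
    proof (subst card_permutations_of_set[OF X(1)], rule arg_cong2[where f="(/)"], rule sum.cong[OF refl])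
      fix p assume p: "p \<in> permutations_of_set X"
      have fp: "finite (preceding p i)" unfolding preceding_def by simp
      have "load w e (preceding p i) + real (w i e) = load w e (preceding p i \<union> {i})"
        unfolding load_def using fp preceding_notin[of i p] by simp
      then show "costF q \<sigma> \<xi> \<alpha> e (load w e (preceding p i) + real (w i e)) -
          costF q \<sigma> \<xi> \<alpha> e (load w e (preceding p i)) =
          g (preceding p i \<union> {i}) - g (preceding p i)" unfolding g_def by simp
    qed simp
    also have "\<dots> = Pot g X - Pot g (X - {i})"
      using Msum_Pot[of X i g] X g0 by simp
    finally show ?thesis .
  qed
  have "(\<Sum>i\<in>S. shapley q w \<sigma> \<xi> \<alpha> i e (preceding \<psi> i \<union> {i}))
      = (\<Sum>i\<in>S. Pot g (preceding \<psi> i \<union> {i}) - Pot g (preceding \<psi> i))"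
  proof (rule sum.cong[OF refl])
    fix i assume "i \<in> S"
    have "finite (preceding \<psi> i \<union> {i})" unfolding preceding_def by simp
    moreover have "(preceding \<psi> i \<union> {i}) - {i} = preceding \<psi> i" using preceding_notin[of i \<psi>] by auto
    ultimately show "shapley q w \<sigma> \<xi> \<alpha> i e (preceding \<psi> i \<union> {i}) = Pot g (preceding \<psi> i \<union> {i}) - Pot g (preceding \<psi> i)"
      using sh by simp
  qed
  also have "\<dots> = Pot g S" using tele[OF dpsi, of g] spsi by simp
  also have "Pot g S = (\<Sum>T\<in>Pow S - {{}}. (\<sigma> e + hfun q w \<xi> \<alpha> e T) / (real (card S choose card T) * real (card T)))"
  proof -
    have "Pot g S = (\<Sum>T\<in>Pow S. (\<sigma> e + hfun q w \<xi> \<alpha> e T) / (real (card S choose card T) * real (card T)))"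
      unfolding Pot_def
    proof (rule sum.cong[OF refl])
      fix T assume T: "T \<in> Pow S"
      show "g T / (real (card S choose card T) * real (card T)) =
          (\<sigma> e + hfun q w \<xi> \<alpha> e T) / (real (card S choose card T) * real (card T))"
      proof (cases "T = {}")
        case True then show ?thesis by (simp only: True card.empty of_nat_0 mult_zero_right div_by_0)
      next
        case False
        have fT: "finite T" using T finS finite_subset by blast
        have "(\<Sum>i\<in>T. (1::nat)) \<le> (\<Sum>i\<in>T. w i e)"
        proof (rule sum_mono)
          fix i assume "i \<in> T"
          then have "i \<in> {1..N}" using T S_sub by blast
          then show "1 \<le> w i e" by (rule w_pos)
        qed
        then have "card T \<le> (\<Sum>i\<in>T. w i e)" by simp
        moreover have "card T > 0" using False fT by (simp add: card_gt_0_iff)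
        ultimately have "(\<Sum>i\<in>T. w i e) \<noteq> 0" by linarith
        then have "load w e T \<noteq> 0" unfolding load_def by (simp del: of_nat_sum)
        then have "g T = \<sigma> e + hfun q w \<xi> \<alpha> e T"
          unfolding g_def costF_def hfun_def by simp
        then show ?thesis by simp
      qed
    qed
    also have "\<dots> = (\<Sum>T\<in>Pow S - {{}}. (\<sigma> e + hfun q w \<xi> \<alpha> e T) / (real (card S choose card T) * real (card T)))"
      by (subst sum.remove[of "Pow S" "{}"]) (use finS in simp_all)
    finally show ?thesis .
  qed
  also have "\<dots> = (\<Sum>k\<in>{1..card S}. \<Sum>T\<in>{T\<in>Pow S - {{}}. card T = k}. (\<sigma> e + hfun q w \<xi> \<alpha> e T) / (real (card S choose card T) * real (card T)))"
  proof (rule sum.group[symmetric])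
    show "finite (Pow S - {{}})" using finS by simp
    show "finite {1..card S}" by simp
    show "card ` (Pow S - {{}}) \<subseteq> {1..card S}"
    proof
      fix k assume "k \<in> card ` (Pow S - {{}})"
      then obtain T where T: "T \<subseteq> S" "T \<noteq> {}" "k = card T" by auto
      then have "finite T" using finS finite_subset by blast
      then have "card T > 0" using T(2) by (simp add: card_gt_0_iff)
      moreover have "card T \<le> card S" using card_mono[OF finS T(1)] .
      ultimately show "k \<in> {1..card S}" using T(3) by simp
    qed
  qed
  also have "\<dots> = (\<Sum>k=1..card S. \<sigma> e / real k
            + (\<Sum>T\<in>{T. T \<subseteq> S \<and> card T = k}.
                 hfun q w \<xi> \<alpha> e T / (real (card S choose k) * real k)))"
  proof (rule sum.cong[OF refl])
    fix k assume k: "k \<in> {1..card S}"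
    have seq: "{T\<in>Pow S - {{}}. card T = k} = {T. T \<subseteq> S \<and> card T = k}" using k by auto
    have cpos: "real (card S choose k) > 0" using k by simp
    have "(\<Sum>T\<in>{T\<in>Pow S - {{}}. card T = k}. (\<sigma> e + hfun q w \<xi> \<alpha> e T) / (real (card S choose card T) * real (card T)))
       = (\<Sum>T\<in>{T. T \<subseteq> S \<and> card T = k}. \<sigma> e / (real (card S choose k) * real k)
            + hfun q w \<xi> \<alpha> e T / (real (card S choose k) * real k))"
      unfolding seq by (rule sum.cong[OF refl]) (auto simp: add_divide_distrib)
    also have "\<dots> = real (card S choose k) * (\<sigma> e / (real (card S choose k) * real k))
        + (\<Sum>T\<in>{T. T \<subseteq> S \<and> card T = k}. hfun q w \<xi> \<alpha> e T / (real (card S choose k) * real k))"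
      by (simp add: sum.distrib n_subsets[OF finS])
    also have "real (card S choose k) * (\<sigma> e / (real (card S choose k) * real k)) = \<sigma> e / real k"
      using cpos by (simp add: field_simps)
    finally show "(\<Sum>T\<in>{T\<in>Pow S - {{}}. card T = k}. (\<sigma> e + hfun q w \<xi> \<alpha> e T) / (real (card S choose card T) * real (card T)))
       = \<sigma> e / real k + (\<Sum>T\<in>{T. T \<subseteq> S \<and> card T = k}. hfun q w \<xi> \<alpha> e T / (real (card S choose k) * real k))" .
  qed
  finally show ?thesis .
qed

end
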